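(* Let $r:\mathfrak h^*\to\wedge^2\mathfrak g$ be a triangular dynamical $r$-matrix. The following are equivalent: (i) $r$ is splittable, i.e. $i^*\big(r(\lambda)^{\#-1}(\mathfrak h)\big)=\mathfrak h^*$ for every $\lambda\in\mathfrak h^*$, where $r(\lambda)^{\#-1}(\mathfrak h)=\{\xi\in\mathfrak g^*: r(\lambda)^\#\xi\in\mathfrak h\}$; (ii) $r(\lambda)^\#\mathfrak g^*\subset\mathfrak g_\lambda$ for every $\lambda\in\mathfrak h^*$; (iii) for every linear complement $\mathfrak m$ of $\mathfrak h$ in $\mathfrak g$ and every basis $e_1,\dots,e_m$ of $\mathfrak m$, writing $r(\lambda)=\sum a^{ij}(\lambda)h_i\wedge h_j+\sum b^{ij}(\lambda)h_i\wedge e_j+\sum c^{ij}(\lambda)e_i\wedge e_j$ with $a^{ij}=-a^{ji}$, $c^{ij}=-c^{ji}$, one has $\sum_j b^{ij}(\lambda)e_j\in\mathrm{Span}\{\sum_j c^{kj}(\lambda)e_j: k=1,\dots,m\}$ for all $i$ and all $\lambda$; (iv) for each $\lambda\in\mathfrak h^*$ there exist a linear complement $\mathfrak m$ of $\mathfrak h$ in $\mathfrak g$ and a basis $e_1,\dots,e_m$ of $\mathfrak m$ such that $r(\lambda)=\sum a^{ij}(\lambda)h_i\wedge h_j+\sum c^{ij}(\lambda)e_i\wedge e_j$; (v) $T\mathfrak h^*\times\{0\}\subset B$, where $B=\Lambda^\#(A^* )\subset A$.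
   Context: Let $\mathfrak g$ be a finite-dimensional real Lie algebra and $\mathfrak h\subset\mathfrak g$ an abelian Lie subalgebra of dimension $l$ with basis $h_1,\dots,h_l$; $(\lambda^1,\dots,\lambda^l)$ are the induced coordinates on $\mathfrak h^*$. A triangular dynamical $r$-matrix is a smooth map $r:\mathfrak h^*\to\wedge^2\mathfrak g$ with $[h,r(\lambda)]=0$ for $h\in\mathfrak h$ and $\sum_i h_i\wedge\frac{\partial r}{\partial\lambda^i}+\frac12[r,r]=0$ (Schouten-type bracket on $\wedge^\bullet\mathfrak g$). For $\rho\in\wedge^2\mathfrak g$, $\rho^\#:\mathfrak g^*\to\mathfrak g$ is $\langle\rho^\#\xi,\eta\rangle=\rho(\xi,\eta)$; $\mathfrak h^\perp\subset\mathfrak g^*$ is the annihilator of $\mathfrak h$; $i^*:\mathfrak g^*\to\mathfrak h^*$ is restriction; $\mathfrak g_\lambda=\mathfrak h+r(\lambda)^\#\mathfrak h^\perp$. $A=T\mathfrak h^*\times\mathfrak g$ is the bundle over $\mathfrak h^*$ with fiber $A_\lambda\cong\mathfrak h^*\oplus\mathfrak g$, $A^*_\lambda\cong\mathfrak h\oplus\mathfrak g^*$, and $\Lambda^\#:A^*\to A$ is $\Lambda^\#_\lambda(h,\xi)=(i^*\xi,-h+r(\lambda)^\#\xi)$. *)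

theory Defs
  imports "HOL-Analysis.Analysis"
begin

(* Conventions.
   - The finite-dimensional real Lie algebra g is modelled by a type 'g :: euclidean_space
     with a bracket  br :: 'g => 'g => 'g.
   - The dual g^* is identified with 'g via the inner product: a vector x stands for
     the functional u |-> x \<bullet> u.  (Every functional on 'g is of this form.)
   - An element rho of wedge^2 g is a skew bilinear form on g^*, i.e. a skew bilinear
     map 'g => 'g => real; u /\ v is (xi,eta) |-> xi(u) eta(v) - xi(v) eta(u).
     wedge^3 g: skew trilinear forms on g^*, u/\v/\w given by the 3x3 determinant.
   - h has basis hb :: 'l => 'g; h^* is identified with real^'l via the coordinates
     lambda^i(mu) = mu(h_i). *)

definition lie_algebra :: "('g::real_vector \<Rightarrow> 'g \<Rightarrow> 'g) \<Rightarrow> bool" where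
  "lie_algebra br \<longleftrightarrow> bilinear br \<and> (\<forall>x. br x x = 0) \<and>
     (\<forall>x y z. br x (br y z) + br y (br z x) + br z (br x y) = 0)"

definition hsub :: "('l \<Rightarrow> 'g::real_vector) \<Rightarrow> 'g set" where
  "hsub hb = span (range hb)"

definition abelian_subalgebra_basis :: "('g::real_vector \<Rightarrow> 'g \<Rightarrow> 'g) \<Rightarrow> ('l \<Rightarrow> 'g) \<Rightarrow> bool" where
  "abelian_subalgebra_basis br hb \<longleftrightarrow> independent (range hb) \<and> inj hb \<and>
     (\<forall>x\<in>hsub hb. \<forall>y\<in>hsub hb. br x y = 0)"

definition covec :: "('g::euclidean_space \<Rightarrow> real) \<Rightarrow> 'g" where
  "covec \<phi> = (\<Sum>b\<in>Basis. \<phi> b *\<^sub>R b)"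

definition wedge2 :: "'g::euclidean_space \<Rightarrow> 'g \<Rightarrow> 'g \<Rightarrow> 'g \<Rightarrow> real" where
  "wedge2 u v = (\<lambda>x y. (x \<bullet> u) * (y \<bullet> v) - (x \<bullet> v) * (y \<bullet> u))"

definition wedge3 :: "'g::euclidean_space \<Rightarrow> 'g \<Rightarrow> 'g \<Rightarrow> 'g \<Rightarrow> 'g \<Rightarrow> 'g \<Rightarrow> real" where
  "wedge3 u v w = (\<lambda>x y z.
      (x \<bullet> u) * ((y \<bullet> v) * (z \<bullet> w) - (y \<bullet> w) * (z \<bullet> v))
    - (y \<bullet> u) * ((x \<bullet> v) * (z \<bullet> w) - (x \<bullet> w) * (z \<bullet> v))
    + (z \<bullet> u) * ((x \<bullet> v) * (y \<bullet> w) - (x \<bullet> w) * (y \<bullet> v)))"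

definition wedge_vec2 :: "'g::euclidean_space \<Rightarrow> ('g \<Rightarrow> 'g \<Rightarrow> real) \<Rightarrow> 'g \<Rightarrow> 'g \<Rightarrow> 'g \<Rightarrow> real" where
  "wedge_vec2 u \<rho> = (\<lambda>x y z. (x \<bullet> u) * \<rho> y z - (y \<bullet> u) * \<rho> x z + (z \<bullet> u) * \<rho> x y)"

definition is_wedge2 :: "('g::euclidean_space \<Rightarrow> 'g \<Rightarrow> real) \<Rightarrow> bool" where
  "is_wedge2 \<rho> \<longleftrightarrow> bilinear \<rho> \<and> (\<forall>x y. \<rho> x y = - \<rho> y x)"

(* rho^# : g^* -> g,  <rho^# xi, eta> = rho(xi, eta) *)
definition sharp :: "('g::euclidean_space \<Rightarrow> 'g \<Rightarrow> real) \<Rightarrow> 'g \<Rightarrow> 'g" where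
  "sharp \<rho> \<xi> = (\<Sum>b\<in>Basis. \<rho> \<xi> b *\<^sub>R b)"

(* adjoint action [h, rho] of h in g on rho in wedge^2 g
   (extension of ad_h as a derivation: [h, u/\v] = [h,u]/\v + u/\[h,v]) *)
definition ad_wedge2 :: "('g::euclidean_space \<Rightarrow> 'g \<Rightarrow> 'g) \<Rightarrow> 'g \<Rightarrow> ('g \<Rightarrow> 'g \<Rightarrow> real) \<Rightarrow> 'g \<Rightarrow> 'g \<Rightarrow> real" where
  "ad_wedge2 br h \<rho> = (\<lambda>x y. \<rho> (covec (\<lambda>u. x \<bullet> br h u)) y + \<rho> x (covec (\<lambda>u. y \<bullet> br h u)))"

(* Schouten bracket of two bivectors: with rho = 1/2 sum_{a,b} rho(a,b) a/\b (orthonormal basis)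
   and [X1/\X2, Y1/\Y2] = [X1,Y1]/\X2/\Y2 - [X1,Y2]/\X2/\Y1 - [X2,Y1]/\X1/\Y2 + [X2,Y2]/\X1/\Y1 *)
definition schouten :: "('g::euclidean_space \<Rightarrow> 'g \<Rightarrow> 'g) \<Rightarrow> ('g \<Rightarrow> 'g \<Rightarrow> real) \<Rightarrow> ('g \<Rightarrow> 'g \<Rightarrow> real)
     \<Rightarrow> 'g \<Rightarrow> 'g \<Rightarrow> 'g \<Rightarrow> real" where
  "schouten br \<rho> \<sigma> = (\<lambda>x y z. \<Sum>a\<in>Basis. \<Sum>b\<in>Basis. \<Sum>c\<in>Basis. \<Sum>d\<in>Basis.
      (1/4) * \<rho> a b * \<sigma> c d *
        (wedge3 (br a c) b d x y z - wedge3 (br a d) b c x y z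
         - wedge3 (br b c) a d x y z + wedge3 (br b d) a c x y z))"

definition pderiv_coord :: "'l \<Rightarrow> (real^'l \<Rightarrow> real) \<Rightarrow> real^'l \<Rightarrow> real" where
  "pderiv_coord i f la = frechet_derivative f (at la) (axis i 1)"

coinductive smooth_fun :: "(real^'l \<Rightarrow> real) \<Rightarrow> bool" where
  "(\<forall>la. f differentiable (at la)) \<Longrightarrow> (\<forall>i. smooth_fun (pderiv_coord i f)) \<Longrightarrow> smooth_fun f"

definition triangular_dynamical_r_matrix ::
  "('g::euclidean_space \<Rightarrow> 'g \<Rightarrow> 'g) \<Rightarrow> ('l::finite \<Rightarrow> 'g) \<Rightarrow> (real^'l \<Rightarrow> 'g \<Rightarrow> 'g \<Rightarrow> real) \<Rightarrow> bool" where
  "triangular_dynamical_r_matrix br hb r \<longleftrightarrow>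
     (\<forall>la. is_wedge2 (r la)) \<and>
     (\<forall>\<xi> \<eta>. smooth_fun (\<lambda>la. r la \<xi> \<eta>)) \<and>
     (\<forall>la. \<forall>h\<in>hsub hb. ad_wedge2 br h (r la) = (\<lambda>x y. 0)) \<and>
     (\<forall>la x y z. (\<Sum>i\<in>UNIV. wedge_vec2 (hb i) (\<lambda>\<xi> \<eta>. pderiv_coord i (\<lambda>\<mu>. r \<mu> \<xi> \<eta>) la) x y z)
                 + (1/2) * schouten br (r la) (r la) x y z = 0)"

definition hperp :: "('l \<Rightarrow> 'g::euclidean_space) \<Rightarrow> 'g set" where
  "hperp hb = {\<xi>. \<forall>x\<in>hsub hb. \<xi> \<bullet> x = 0}"

definition istar :: "('l::finite \<Rightarrow> 'g::euclidean_space) \<Rightarrow> 'g \<Rightarrow> real^'l" where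
  "istar hb \<xi> = (\<chi> i. \<xi> \<bullet> hb i)"

definition g_lambda :: "('l \<Rightarrow> 'g::euclidean_space) \<Rightarrow> ('g \<Rightarrow> 'g \<Rightarrow> real) \<Rightarrow> 'g set" where
  "g_lambda hb \<rho> = {x + sharp \<rho> \<eta> | x \<eta>. x \<in> hsub hb \<and> \<eta> \<in> hperp hb}"

definition Lambda_sharp :: "('l::finite \<Rightarrow> 'g::euclidean_space) \<Rightarrow> (real^'l \<Rightarrow> 'g \<Rightarrow> 'g \<Rightarrow> real)
     \<Rightarrow> real^'l \<Rightarrow> 'g \<times> 'g \<Rightarrow> (real^'l) \<times> 'g" where
  "Lambda_sharp hb r la p = (istar hb (snd p), - fst p + sharp (r la) (snd p))"

(* B = Lambda^#(A^* ) inside A = T h^* x g, as set of pairs (base point, fibre element);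
   A^*_lambda = h (+) g^* *)
definition Bset :: "('l::finite \<Rightarrow> 'g::euclidean_space) \<Rightarrow> (real^'l \<Rightarrow> 'g \<Rightarrow> 'g \<Rightarrow> real)
     \<Rightarrow> ((real^'l) \<times> ((real^'l) \<times> 'g)) set" where
  "Bset hb r = {(la, Lambda_sharp hb r la (h, \<xi>)) | la h \<xi>. h \<in> hsub hb}"

definition lin_complement :: "'g::real_vector set \<Rightarrow> 'g set \<Rightarrow> bool" where
  "lin_complement H M \<longleftrightarrow> subspace M \<and> H \<inter> M = {0} \<and> {x + y | x y. x \<in> H \<and> y \<in> M} = UNIV"

definition basis_of :: "(nat \<Rightarrow> 'g::real_vector) \<Rightarrow> nat \<Rightarrow> 'g set \<Rightarrow> bool" where
  "basis_of e m M \<longleftrightarrow> inj_on e {..<m} \<and> independent (e ` {..<m}) \<and> span (e ` {..<m}) = M"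

end

theory Submission
  imports Defs
begin

lemma w2_bil: "is_wedge2 \<rho> \<Longrightarrow> bilinear \<rho>" unfolding is_wedge2_def by blast
lemma w2_skew: "is_wedge2 \<rho> \<Longrightarrow> \<rho> x y = - \<rho> y x" unfolding is_wedge2_def by blast

lemma bil_l: "bilinear \<rho> \<Longrightarrow> linear (\<lambda>x. \<rho> x y)" by (simp add: bilinear_def)
lemma bil_r: "bilinear \<rho> \<Longrightarrow> linear (\<lambda>y. \<rho> x y)" by (simp add: bilinear_def)

lemma sharp_inner:
  fixes \<rho> :: "'g::euclidean_space \<Rightarrow> 'g \<Rightarrow> real"
  assumes "is_wedge2 \<rho>" shows "z \<bullet> sharp \<rho> \<xi> = \<rho> \<xi> z"
proof -
  have l: "linear (\<lambda>y. \<rho> \<xi> y)" by (rule bil_r[OF w2_bil[OF assms]])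
  have "\<rho> \<xi> z = \<rho> \<xi> (\<Sum>b\<in>Basis. (z \<bullet> b) *\<^sub>R b)" by (simp add: euclidean_representation)
  also have "\<dots> = (\<Sum>b\<in>Basis. (z \<bullet> b) * \<rho> \<xi> b)"
    by (simp only: linear_sum[OF l] linear_scale[OF l] real_scaleR_def)
  finally show ?thesis by (simp add: sharp_def inner_sum_right mult.commute)
qed

lemma sharp_eq:
  fixes \<rho> :: "'g::euclidean_space \<Rightarrow> 'g \<Rightarrow> real"
  assumes "is_wedge2 \<rho>" "\<And>y. \<rho> \<xi> y = y \<bullet> v" shows "sharp \<rho> \<xi> = v"
  using sharp_inner[OF assms(1)] assms(2) vector_eq_ldot by metis

lemma sharp_linear:
  fixes \<rho> :: "'g::euclidean_space \<Rightarrow> 'g \<Rightarrow> real"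
  assumes "is_wedge2 \<rho>" shows "linear (sharp \<rho>)"
proof -
  have l: "linear (\<lambda>x. \<rho> x y)" for y by (rule bil_l[OF w2_bil[OF assms]])
  show ?thesis
  proof (rule linearI)
    fix a b :: 'g and c :: real
    show "sharp \<rho> (a + b) = sharp \<rho> a + sharp \<rho> b"
      by (rule sharp_eq[OF assms]) (simp add: sharp_inner[OF assms] inner_add_right linear_add[OF l])
    show "sharp \<rho> (c *\<^sub>R a) = c *\<^sub>R sharp \<rho> a"
      by (rule sharp_eq[OF assms]) (simp add: sharp_inner[OF assms] linear_scale[OF l])
  qed
qed

lemma functional_rep:
  fixes g :: "'g::euclidean_space \<Rightarrow> real"
  assumes "linear g" shows "\<exists>\<xi>. \<forall>x. \<xi> \<bullet> x = g x"
proof (intro exI allI)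
  fix x :: 'g
  have "g x = g (\<Sum>b\<in>Basis. (x \<bullet> b) *\<^sub>R b)" by (simp add: euclidean_representation)
  also have "\<dots> = (\<Sum>b\<in>Basis. (x \<bullet> b) * g b)"
    by (simp only: linear_sum[OF assms] linear_scale[OF assms] real_scaleR_def)
  finally show "(\<Sum>b\<in>Basis. g b *\<^sub>R b) \<bullet> x = g x"
    by (simp add: inner_sum_left) (auto intro!: sum.cong simp: inner_commute)
qed

lemma ext_dual:
  fixes B :: "'g::euclidean_space set"
  assumes "independent B" shows "\<exists>\<xi>. \<forall>v\<in>B. \<xi> \<bullet> v = f v"
  using linear_independent_extend[OF assms, of f] functional_rep by metis

lemma hsub_subspace: "subspace (hsub hb)" by (simp add: hsub_def)
lemma hb_in: "hb i \<in> hsub hb" by (simp add: hsub_def span_base)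
lemma hsum_in: "(\<Sum>i\<in>I. c i *\<^sub>R hb i) \<in> hsub hb"
  unfolding hsub_def by (intro span_sum span_scale span_base) auto

lemma perp_h:
  fixes hb :: "'l \<Rightarrow> 'g::euclidean_space"
  assumes "\<And>i. v \<bullet> hb i = 0" "x \<in> hsub hb" shows "v \<bullet> x = 0"
  using orthogonal_to_span[of x "range hb" v] assms unfolding hsub_def orthogonal_def by auto

lemma istar_surj:
  fixes hb :: "'l::finite \<Rightarrow> 'g::euclidean_space"
  assumes "independent (range hb)" "inj hb" shows "\<exists>\<xi>. istar hb \<xi> = \<mu>"
proof -
  obtain \<xi> where "\<forall>v\<in>range hb. \<xi> \<bullet> v = \<mu> $ (inv hb v)"
    using ext_dual[OF assms(1), of "\<lambda>v. \<mu> $ inv hb v"] by blast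
  then have "\<xi> \<bullet> hb i = \<mu> $ i" for i using assms(2) by auto
  then show ?thesis by (auto simp: istar_def vec_eq_iff)
qed

definition etaf :: "('l::finite \<Rightarrow> 'g::euclidean_space) \<Rightarrow> ('l \<Rightarrow> 'g) \<Rightarrow> 'g \<Rightarrow> 'g" where
  "etaf hb \<xi> u = u - (\<Sum>i\<in>UNIV. (u \<bullet> hb i) *\<^sub>R \<xi> i)"

definition Pj :: "('l::finite \<Rightarrow> 'g::euclidean_space) \<Rightarrow> ('l \<Rightarrow> 'g) \<Rightarrow> 'g \<Rightarrow> 'g" where
  "Pj hb \<xi> x = (\<Sum>i\<in>UNIV. (\<xi> i \<bullet> x) *\<^sub>R hb i)"

lemma P_id:
  fixes hb :: "'l::finite \<Rightarrow> 'g::euclidean_space"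
  assumes dual: "\<And>i j. \<xi> i \<bullet> hb j = (if i = j then 1 else 0)" and x: "x \<in> hsub hb"
  shows "Pj hb \<xi> x = x"
proof -
  have "subspace {x. Pj hb \<xi> x = x}"
    unfolding subspace_def Pj_def
    by (simp add: inner_add_right scaleR_add_left sum.distrib flip: scaleR_scaleR scaleR_sum_right)
  moreover have "Pj hb \<xi> (hb j) = hb j" for j
    by (simp add: Pj_def dual if_distrib[of "\<lambda>c. c *\<^sub>R hb _"] cong: if_cong)
  moreover have "x \<in> span (range hb)" using x unfolding hsub_def .
  ultimately show ?thesis
    using span_induct[of x "range hb" "\<lambda>x. Pj hb \<xi> x = x"] by auto
qed

lemma eta_perp:
  fixes hb :: "'l::finite \<Rightarrow> 'g::euclidean_space"
  assumes dual: "\<And>i j. \<xi> i \<bullet> hb j = (if i = j then 1 else 0)"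
  shows "etaf hb \<xi> u \<bullet> hb j = 0"
  by (simp add: etaf_def inner_diff_left inner_sum_left dual if_distrib[of "\<lambda>c. _ * c"] cong: if_cong)

lemma frame:
  fixes hb :: "'l::finite \<Rightarrow> 'g::euclidean_space" and \<xi> :: "'l \<Rightarrow> 'g"
  assumes dual: "\<And>i j. \<xi> i \<bullet> hb j = (if i = j then 1 else 0)"
  obtains M e m where "lin_complement (hsub hb) M" "basis_of e m M"
    "\<And>j k. j < m \<Longrightarrow> k < m \<Longrightarrow> e j \<bullet> e k = (if j = k then 1 else 0)"
    "\<And>i k. k < m \<Longrightarrow> \<xi> i \<bullet> e k = 0"
    "\<And>v. v = (\<Sum>i\<in>UNIV. (\<xi> i \<bullet> v) *\<^sub>R hb i) + (\<Sum>k<m. (etaf hb \<xi> (e k) \<bullet> v) *\<^sub>R e k)"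
    "\<And>x. x = (\<Sum>i\<in>UNIV. (x \<bullet> hb i) *\<^sub>R \<xi> i) + (\<Sum>k<m. (x \<bullet> e k) *\<^sub>R etaf hb \<xi> (e k))"
proof -
  define M where "M = {x. \<forall>i. \<xi> i \<bullet> x = 0}"
  have subM: "subspace M" unfolding subspace_def M_def by (simp add: inner_add_right)
  obtain B where B: "B \<subseteq> M" "pairwise orthogonal B" "\<And>x. x \<in> B \<Longrightarrow> norm x = 1"
     "independent B" "span B = M"
    using orthonormal_basis_subspace[OF subM] by metis
  have "finite B" using B(4) independent_imp_finite by blast
  then obtain es where es: "set es = B" "distinct es" using finite_distinct_list by blast
  define e where "e = (\<lambda>k. es ! k)"
  define m where "m = length es"
  have eim: "e ` {..<m} = B" using es(1) unfolding e_def m_def by (auto simp: set_conv_nth)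
  have eM: "k < m \<Longrightarrow> e k \<in> M" for k using eim B(1) by auto
  have orth: "e j \<bullet> e k = (if j = k then 1 else 0)" if "j < m" "k < m" for j k
  proof (cases "j = k")
    case True
    then have "norm (e k) = 1" using B(3) eim that by auto
    then show ?thesis using True by (simp add: norm_eq_1)
  next
    case False
    then have "e j \<noteq> e k" using es(2) that unfolding e_def m_def by (simp add: nth_eq_iff_index_eq)
    then show ?thesis using B(2) eim that False unfolding pairwise_def orthogonal_def by auto
  qed
  have bas: "basis_of e m M"
    unfolding basis_of_def using eim B es(2)
    by (auto simp: e_def m_def intro!: inj_on_nth)
  have expM: "z = (\<Sum>k<m. (z \<bullet> e k) *\<^sub>R e k)" if "z \<in> M" for z
  proof -
    have "subspace {z. z = (\<Sum>k<m. (z \<bullet> e k) *\<^sub>R e k)}"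
      unfolding subspace_def
      by (simp add: inner_add_left scaleR_add_left sum.distrib flip: scaleR_scaleR scaleR_sum_right)
    moreover have "e j = (\<Sum>k<m. (e j \<bullet> e k) *\<^sub>R e k)" if "j < m" for j
      using that by (simp add: orth if_distrib[of "\<lambda>c. c *\<^sub>R e _"] cong: if_cong)
    moreover have "z \<in> span (e ` {..<m})" using that B(5) eim by simp
    ultimately show ?thesis
      using span_induct[of z "e ` {..<m}" "\<lambda>z. z = (\<Sum>k<m. (z \<bullet> e k) *\<^sub>R e k)"] by auto
  qed
  have xie: "\<xi> i \<bullet> e k = 0" if "k < m" for i k using eM[OF that] M_def by auto
  have dualfr: "v = (\<Sum>i\<in>UNIV. (\<xi> i \<bullet> v) *\<^sub>R hb i) + (\<Sum>k<m. (etaf hb \<xi> (e k) \<bullet> v) *\<^sub>R e k)" for v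
  proof -
    define Q where "Q = v - Pj hb \<xi> v"
    have QM: "Q \<in> M" unfolding M_def Q_def Pj_def
      by (simp add: inner_diff_right inner_sum_right dual if_distrib[of "\<lambda>c. _ * c"] cong: if_cong)
    have "Q \<bullet> e k = etaf hb \<xi> (e k) \<bullet> v" for k
      unfolding Q_def Pj_def etaf_def
      by (simp add: inner_diff_left inner_diff_right inner_sum_left inner_sum_right inner_commute mult.commute)
    then have "Q = (\<Sum>k<m. (etaf hb \<xi> (e k) \<bullet> v) *\<^sub>R e k)" using expM[OF QM] by simp
    then show ?thesis unfolding Q_def Pj_def by (simp add: algebra_simps)
  qed
  have primfr: "x = (\<Sum>i\<in>UNIV. (x \<bullet> hb i) *\<^sub>R \<xi> i) + (\<Sum>k<m. (x \<bullet> e k) *\<^sub>R etaf hb \<xi> (e k))" for x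
  proof -
    have "x \<bullet> v = ((\<Sum>i\<in>UNIV. (x \<bullet> hb i) *\<^sub>R \<xi> i) + (\<Sum>k<m. (x \<bullet> e k) *\<^sub>R etaf hb \<xi> (e k))) \<bullet> v" for v
    proof -
      have "x \<bullet> v = x \<bullet> ((\<Sum>i\<in>UNIV. (\<xi> i \<bullet> v) *\<^sub>R hb i) + (\<Sum>k<m. (etaf hb \<xi> (e k) \<bullet> v) *\<^sub>R e k))"
        using dualfr[of v] by simp
      then show ?thesis by (simp add: inner_add_left inner_add_right inner_sum_left inner_sum_right mult.commute)
    qed
    then show ?thesis using vector_eq_rdot by blast
  qed
  have lc: "lin_complement (hsub hb) M"
    unfolding lin_complement_def
  proof (intro conjI subM)
    show "hsub hb \<inter> M = {0}"
    proof
      show "hsub hb \<inter> M \<subseteq> {0}"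
      proof
        fix x assume x: "x \<in> hsub hb \<inter> M"
        then have "x = Pj hb \<xi> x" using P_id[OF dual] by auto
        also have "\<dots> = 0" using x unfolding Pj_def M_def by simp
        finally show "x \<in> {0}" by simp
      qed
      show "{0} \<subseteq> hsub hb \<inter> M" using subM hsub_subspace subspace_0 by blast
    qed
    show "{x + y |x y. x \<in> hsub hb \<and> y \<in> M} = UNIV"
    proof (rule set_eqI, rule iffI)
      fix v :: 'g
      show "v \<in> {x + y |x y. x \<in> hsub hb \<and> y \<in> M}"
      proof (intro CollectI exI conjI)
        show "v = Pj hb \<xi> v + (v - Pj hb \<xi> v)" by simp
        show "Pj hb \<xi> v \<in> hsub hb" unfolding Pj_def by (rule hsum_in)
        show "v - Pj hb \<xi> v \<in> M" unfolding M_def Pj_def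
          by (simp add: inner_diff_right inner_sum_right dual if_distrib[of "\<lambda>c. _ * c"] cong: if_cong)
      qed
    qed simp
  qed
  show ?thesis using that[OF lc bas orth xie dualfr primfr] by blast
qed

lemma bil2:
  assumes "bilinear \<rho>"
  shows "\<rho> (\<Sum>i\<in>I. s i *\<^sub>R p i) (\<Sum>j\<in>J. t j *\<^sub>R q j) = (\<Sum>i\<in>I. \<Sum>j\<in>J. s i * t j * \<rho> (p i) (q j))"
  by (simp add: bilinear_sum[OF assms] bilinear_lmul[OF assms] bilinear_rmul[OF assms]
      sum.cartesian_product case_prod_beta) (simp add: mult.assoc mult.left_commute)

lemma skew_sum:
  fixes R :: "'a \<Rightarrow> 'a \<Rightarrow> real"
  assumes "\<And>i j. R i j = - R j i"
  shows "(\<Sum>i\<in>I. \<Sum>j\<in>I. (R i j / 2) * (s i * t j - s j * t i)) = (\<Sum>i\<in>I. \<Sum>j\<in>I. s i * t j * R i j)"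
proof -
  have A: "(\<Sum>i\<in>I. \<Sum>j\<in>I. R i j * (s j * t i)) = - (\<Sum>i\<in>I. \<Sum>j\<in>I. s i * t j * R i j)"
  proof -
    have "(\<Sum>i\<in>I. \<Sum>j\<in>I. R i j * (s j * t i)) = (\<Sum>j\<in>I. \<Sum>i\<in>I. R i j * (s j * t i))"
      by (rule sum.swap)
    also have "\<dots> = (\<Sum>j\<in>I. \<Sum>i\<in>I. - (s j * t i * R j i))"
      by (intro sum.cong refl) (subst assms, simp)
    finally show ?thesis by (simp add: sum_negf)
  qed
  have "(\<Sum>i\<in>I. \<Sum>j\<in>I. (R i j / 2) * (s i * t j - s j * t i))
      = (1/2) * ((\<Sum>i\<in>I. \<Sum>j\<in>I. s i * t j * R i j) - (\<Sum>i\<in>I. \<Sum>j\<in>I. R i j * (s j * t i)))"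
    by (simp add: sum_distrib_left sum_subtractf[symmetric] right_diff_distrib mult_ac)
  then show ?thesis using A by simp
qed

lemma cross_sum:
  fixes R :: "'a \<Rightarrow> 'b \<Rightarrow> real"
  shows "(\<Sum>i\<in>I. \<Sum>k\<in>K. s i * t' k * R i k) + (\<Sum>k\<in>K. \<Sum>i\<in>I. s' k * t i * (- R i k))
     = (\<Sum>i\<in>I. \<Sum>k\<in>K. R i k * (s i * t' k - s' k * t i))"
proof -
  have "(\<Sum>k\<in>K. \<Sum>i\<in>I. s' k * t i * (- R i k)) = (\<Sum>i\<in>I. \<Sum>k\<in>K. s' k * t i * (- R i k))"
    by (rule sum.swap)
  then show ?thesis by (simp add: sum.distrib[symmetric] right_diff_distrib mult_ac)
qed


lemma expand:
  fixes \<rho> :: "'g::euclidean_space \<Rightarrow> 'g \<Rightarrow> real"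
  assumes w: "is_wedge2 \<rho>"
    and fr: "\<And>x. x = (\<Sum>i\<in>I. (x \<bullet> u i) *\<^sub>R p i) + (\<Sum>k\<in>K. (x \<bullet> w k) *\<^sub>R q k)"
  shows "\<rho> x y = (\<Sum>i\<in>I. \<Sum>j\<in>I. (\<rho> (p i) (p j) / 2) * wedge2 (u i) (u j) x y)
     + (\<Sum>i\<in>I. \<Sum>k\<in>K. \<rho> (p i) (q k) * wedge2 (u i) (w k) x y)
     + (\<Sum>k\<in>K. \<Sum>j\<in>K. (\<rho> (q k) (q j) / 2) * wedge2 (w k) (w j) x y)"
proof -
  have b: "bilinear \<rho>" using w unfolding is_wedge2_def by blast
  have sk: "\<And>a b. \<rho> a b = - \<rho> b a" using w unfolding is_wedge2_def by blast
  have "\<rho> x y = \<rho> ((\<Sum>i\<in>I. (x \<bullet> u i) *\<^sub>R p i) + (\<Sum>k\<in>K. (x \<bullet> w k) *\<^sub>R q k))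
                  ((\<Sum>i\<in>I. (y \<bullet> u i) *\<^sub>R p i) + (\<Sum>k\<in>K. (y \<bullet> w k) *\<^sub>R q k))"
    using fr[of x] fr[of y] by simp
  also have "\<dots> = (\<Sum>i\<in>I. \<Sum>j\<in>I. (x \<bullet> u i) * (y \<bullet> u j) * \<rho> (p i) (p j))
      + ((\<Sum>i\<in>I. \<Sum>k\<in>K. (x \<bullet> u i) * (y \<bullet> w k) * \<rho> (p i) (q k))
      + (\<Sum>k\<in>K. \<Sum>i\<in>I. (x \<bullet> w k) * (y \<bullet> u i) * (- \<rho> (p i) (q k))))
      + (\<Sum>k\<in>K. \<Sum>j\<in>K. (x \<bullet> w k) * (y \<bullet> w j) * \<rho> (q k) (q j))"
    by (simp add: bilinear_ladd[OF b] bilinear_radd[OF b] bil2[OF b] sk[of "q _" "p _"])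
  also have "\<dots> = (\<Sum>i\<in>I. \<Sum>j\<in>I. (\<rho> (p i) (p j) / 2) * wedge2 (u i) (u j) x y)
     + (\<Sum>i\<in>I. \<Sum>k\<in>K. \<rho> (p i) (q k) * wedge2 (u i) (w k) x y)
     + (\<Sum>k\<in>K. \<Sum>j\<in>K. (\<rho> (q k) (q j) / 2) * wedge2 (w k) (w j) x y)"
  proof -
    have e1: "(\<Sum>i\<in>I. \<Sum>j\<in>I. (\<rho> (p i) (p j) / 2) * wedge2 (u i) (u j) x y)
       = (\<Sum>i\<in>I. \<Sum>j\<in>I. (x \<bullet> u i) * (y \<bullet> u j) * \<rho> (p i) (p j))"
      unfolding wedge2_def by (rule skew_sum[where R="\<lambda>i j. \<rho> (p i) (p j)" and s="\<lambda>i. x \<bullet> u i" and t="\<lambda>j. y \<bullet> u j"]) (rule sk)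
    have e3: "(\<Sum>k\<in>K. \<Sum>j\<in>K. (\<rho> (q k) (q j) / 2) * wedge2 (w k) (w j) x y)
       = (\<Sum>k\<in>K. \<Sum>j\<in>K. (x \<bullet> w k) * (y \<bullet> w j) * \<rho> (q k) (q j))"
      unfolding wedge2_def by (rule skew_sum[where R="\<lambda>i j. \<rho> (q i) (q j)" and s="\<lambda>i. x \<bullet> w i" and t="\<lambda>j. y \<bullet> w j"]) (rule sk)
    have e2: "(\<Sum>i\<in>I. \<Sum>k\<in>K. \<rho> (p i) (q k) * wedge2 (u i) (w k) x y)
       = (\<Sum>i\<in>I. \<Sum>k\<in>K. (x \<bullet> u i) * (y \<bullet> w k) * \<rho> (p i) (q k))
      + (\<Sum>k\<in>K. \<Sum>i\<in>I. (x \<bullet> w k) * (y \<bullet> u i) * (- \<rho> (p i) (q k)))"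
      unfolding wedge2_def by (rule cross_sum[symmetric])
    show ?thesis by (simp only: e1 e2 e3)
  qed
  finally show ?thesis .
qed



lemma istar_inner: "istar hb \<xi> $ i = \<xi> \<bullet> hb i" by (simp add: istar_def)

lemma hsub_add: "x \<in> hsub hb \<Longrightarrow> y \<in> hsub hb \<Longrightarrow> x + y \<in> hsub hb"
  by (simp add: hsub_def span_add)
lemma hsub_diff: "x \<in> hsub hb \<Longrightarrow> y \<in> hsub hb \<Longrightarrow> x - y \<in> hsub hb"
  by (simp add: hsub_def span_diff)

lemma dual_of_axes1:
  assumes "istar hb X = axis i 1"
  shows "X \<bullet> hb j = (if i = j then 1 else 0)"
proof -
  have "istar hb X $ j = axis i 1 $ j" using assms by simp
  then show ?thesis by (simp add: istar_inner axis_def)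
qed

lemma dual_of_axes:
  assumes "\<And>i. istar hb (X i) = axis i 1"
  shows "X i \<bullet> hb j = (if i = j then 1 else 0)"
  by (rule dual_of_axes1[OF assms])

lemma dir12:
  fixes hb :: "'l::finite \<Rightarrow> 'g::euclidean_space"
  assumes w: "is_wedge2 \<rho>" and c1: "istar hb ` {\<xi>. sharp \<rho> \<xi> \<in> hsub hb} = UNIV"
  shows "range (sharp \<rho>) \<subseteq> g_lambda hb \<rho>"
proof
  fix v assume "v \<in> range (sharp \<rho>)"
  then obtain \<xi> where v: "v = sharp \<rho> \<xi>" by blast
  obtain \<xi>' where \<xi>': "istar hb \<xi>' = istar hb \<xi>" "sharp \<rho> \<xi>' \<in> hsub hb"
    using c1 by (metis (no_types, lifting) UNIV_I imageE mem_Collect_eq)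
  have "\<xi>' \<bullet> hb i = \<xi> \<bullet> hb i" for i using arg_cong[OF \<xi>'(1), of "\<lambda>v. v $ i"] by (simp add: istar_inner)
  then have "(\<xi> - \<xi>') \<bullet> hb i = 0" for i by (simp add: inner_diff_left)
  then have hp: "\<xi> - \<xi>' \<in> hperp hb" unfolding hperp_def using perp_h by blast
  have "v = sharp \<rho> \<xi>' + sharp \<rho> (\<xi> - \<xi>')"
    using v linear_diff[OF sharp_linear[OF w]] by simp
  then show "v \<in> g_lambda hb \<rho>" unfolding g_lambda_def using \<xi>'(2) hp by blast
qed

lemma dir21:
  fixes hb :: "'l::finite \<Rightarrow> 'g::euclidean_space"
  assumes w: "is_wedge2 \<rho>" and ind: "independent (range hb)" "inj hb"
    and c2: "range (sharp \<rho>) \<subseteq> g_lambda hb \<rho>"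
  shows "istar hb ` {\<xi>. sharp \<rho> \<xi> \<in> hsub hb} = UNIV"
proof (rule set_eqI, rule iffI)
  fix \<mu> :: "real^'l"
  obtain \<xi>0 where \<xi>0: "istar hb \<xi>0 = \<mu>" using istar_surj[OF ind] by blast
  have "sharp \<rho> \<xi>0 \<in> g_lambda hb \<rho>" using c2 by blast
  then obtain x \<eta> where xe: "sharp \<rho> \<xi>0 = x + sharp \<rho> \<eta>" "x \<in> hsub hb" "\<eta> \<in> hperp hb"
    unfolding g_lambda_def by blast
  have "istar hb \<eta> = 0" using xe(3) hb_in[of hb] unfolding hperp_def by (auto simp: vec_eq_iff istar_inner)
  then have "istar hb (\<xi>0 - \<eta>) = \<mu>" using \<xi>0 by (simp add: istar_def vec_eq_iff inner_diff_left)
  moreover have "sharp \<rho> (\<xi>0 - \<eta>) = x" using xe(1) linear_diff[OF sharp_linear[OF w]] by simp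
  ultimately show "\<mu> \<in> istar hb ` {\<xi>. sharp \<rho> \<xi> \<in> hsub hb}" using xe(2) by blast
qed simp

lemma axes:
  fixes hb :: "'l::finite \<Rightarrow> 'g::euclidean_space"
  assumes w: "is_wedge2 \<rho>" and ax: "\<And>i. \<exists>\<xi>. istar hb \<xi> = axis i 1 \<and> sharp \<rho> \<xi> \<in> hsub hb"
  shows "istar hb ` {\<xi>. sharp \<rho> \<xi> \<in> hsub hb} = UNIV"
proof (rule set_eqI, rule iffI)
  fix \<mu> :: "real^'l"
  have "\<forall>i. \<exists>\<xi>. istar hb \<xi> = axis i 1 \<and> sharp \<rho> \<xi> \<in> hsub hb" using ax by blast
  then obtain X where X0: "\<forall>i. istar hb (X i) = axis i 1 \<and> sharp \<rho> (X i) \<in> hsub hb"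
    by (rule choice[THEN exE]) blast
  have X: "\<And>i. istar hb (X i) = axis i 1" "\<And>i. sharp \<rho> (X i) \<in> hsub hb" using X0 by auto
  have Xd: "X i \<bullet> hb j = (if j = i then 1 else 0)" for i j
    using dual_of_axes1[OF X(1)[of i], of j] by auto
  define \<xi> where "\<xi> = (\<Sum>i\<in>UNIV. (\<mu> $ i) *\<^sub>R X i)"
  have "istar hb \<xi> = \<mu>"
    by (simp add: vec_eq_iff istar_inner \<xi>_def inner_sum_left Xd if_distrib[of "\<lambda>c. _ * c"] cong: if_cong)
  moreover have "sharp \<rho> \<xi> \<in> hsub hb"
    unfolding \<xi>_def linear_sum[OF sharp_linear[OF w]] o_def linear_scale[OF sharp_linear[OF w]]
    using X(2) unfolding hsub_def by (intro span_sum span_scale) auto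
  ultimately show "\<mu> \<in> istar hb ` {\<xi>. sharp \<rho> \<xi> \<in> hsub hb}" by blast
qed simp

lemma dir14:
  fixes hb :: "'l::finite \<Rightarrow> 'g::euclidean_space" and \<rho> :: "'g \<Rightarrow> 'g \<Rightarrow> real"
  assumes w: "is_wedge2 \<rho>" and c1: "istar hb ` {\<xi>. sharp \<rho> \<xi> \<in> hsub hb} = UNIV"
  shows "\<exists>M e m (a::'l \<Rightarrow> 'l \<Rightarrow> real) (c::nat \<Rightarrow> nat \<Rightarrow> real).
               lin_complement (hsub hb) M \<and> basis_of e m M \<and>
               (\<forall>i j. a i j = - a j i) \<and> (\<forall>i<m. \<forall>j<m. c i j = - c j i) \<and>
               (\<forall>x y. \<rho> x y = (\<Sum>i\<in>UNIV. \<Sum>j\<in>UNIV. a i j * wedge2 (hb i) (hb j) x y)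
                              + (\<Sum>i<m. \<Sum>j<m. c i j * wedge2 (e i) (e j) x y))"
proof -
  have "\<forall>i. \<exists>\<xi>. istar hb \<xi> = axis i 1 \<and> sharp \<rho> \<xi> \<in> hsub hb"
    using c1 by (metis (no_types, lifting) UNIV_I imageE mem_Collect_eq)
  then obtain X where X0: "\<forall>i. istar hb (X i) = axis i 1 \<and> sharp \<rho> (X i) \<in> hsub hb"
    by (rule choice[THEN exE]) blast
  have X: "\<And>i. istar hb (X i) = axis i 1" "\<And>i. sharp \<rho> (X i) \<in> hsub hb" using X0 by auto
  note dual = dual_of_axes[OF X(1)]
  obtain M e m where fr0: "lin_complement (hsub hb) M" "basis_of e m M"
    "\<And>j k. j < m \<Longrightarrow> k < m \<Longrightarrow> e j \<bullet> e k = (if j = k then 1 else 0)"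
    "\<And>i k. k < m \<Longrightarrow> X i \<bullet> e k = 0"
    "\<And>v. v = (\<Sum>i\<in>UNIV. (X i \<bullet> v) *\<^sub>R hb i) + (\<Sum>k<m. (etaf hb X (e k) \<bullet> v) *\<^sub>R e k)"
    "\<And>x. x = (\<Sum>i\<in>UNIV. (x \<bullet> hb i) *\<^sub>R X i) + (\<Sum>k<m. (x \<bullet> e k) *\<^sub>R etaf hb X (e k))"
    by (rule frame[of X hb, OF dual]) blast
  note fr = fr0(1,2,6)
  have sk: "\<And>a b. \<rho> a b = - \<rho> b a" using w unfolding is_wedge2_def by blast
  have z: "\<rho> (X i) (etaf hb X (e k)) = 0" for i k
  proof -
    have "\<rho> (X i) (etaf hb X (e k)) = etaf hb X (e k) \<bullet> sharp \<rho> (X i)" by (simp add: sharp_inner[OF w])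
    also have "\<dots> = 0" using perp_h[OF eta_perp[OF dual] X(2)] by simp
    finally show ?thesis .
  qed
  show ?thesis
  proof (intro exI conjI allI impI)
    show "lin_complement (hsub hb) M" "basis_of e m M" by fact+
    fix x y
    show "\<rho> x y = (\<Sum>i\<in>UNIV. \<Sum>j\<in>UNIV. (\<rho> (X i) (X j) / 2) * wedge2 (hb i) (hb j) x y)
                 + (\<Sum>i<m. \<Sum>j<m. (\<rho> (etaf hb X (e i)) (etaf hb X (e j)) / 2) * wedge2 (e i) (e j) x y)"
      using expand[OF w fr(3), of x y] by (simp add: z)
  qed (subst sk, simp)+
qed

lemma indep_union:
  fixes S T :: "'g::euclidean_space set"
  assumes S: "independent S" and T: "independent T" and st: "span S \<inter> span T = {0}"
  shows "independent (S \<union> T)"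
proof -
  have fS: "finite S" and fT: "finite T" using S T independent_imp_finite by blast+
  have disj: "S \<inter> T = {}"
  proof (rule ccontr)
    assume "S \<inter> T \<noteq> {}"
    then obtain x where "x \<in> S" "x \<in> T" by blast
    then have "x \<in> span S \<inter> span T" by (simp add: span_base)
    then have "x = 0" using st by simp
    then show False using \<open>x \<in> S\<close> S dependent_zero by metis
  qed
  show ?thesis unfolding independent_explicit
  proof (intro conjI allI impI ballI)
    show "finite (S \<union> T)" using fS fT by simp
    fix c :: "'g \<Rightarrow> real" and v
    assume sum0: "(\<Sum>v\<in>S \<union> T. c v *\<^sub>R v) = 0" and v: "v \<in> S \<union> T"
    define a where "a = (\<Sum>v\<in>S. c v *\<^sub>R v)"
    define b where "b = (\<Sum>v\<in>T. c v *\<^sub>R v)"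
    have ab: "a + b = 0" using sum0 unfolding a_def b_def by (simp add: sum.union_disjoint fS fT disj)
    have "a \<in> span S" unfolding a_def by (intro span_sum span_scale span_base) auto
    moreover have "b \<in> span T" unfolding b_def by (intro span_sum span_scale span_base) auto
    moreover have "a = - b" using ab by (simp add: eq_neg_iff_add_eq_0)
    ultimately have "a \<in> span T" by (simp add: span_neg)
    then have "a \<in> span S \<inter> span T" using \<open>a \<in> span S\<close> by simp
    then have a0: "a = 0" using st by simp
    then have b0: "b = 0" using ab by simp
    have iS: "\<forall>c. (\<Sum>v\<in>S. c v *\<^sub>R v) = 0 \<longrightarrow> (\<forall>v\<in>S. c v = 0)"
      using S unfolding independent_explicit by (rule conjunct2)
    have iT: "\<forall>c. (\<Sum>v\<in>T. c v *\<^sub>R v) = 0 \<longrightarrow> (\<forall>v\<in>T. c v = 0)"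
      using T unfolding independent_explicit by (rule conjunct2)
    have "\<forall>v\<in>S. c v = 0" using iS[rule_format, of c] a0 unfolding a_def by simp
    moreover have "\<forall>v\<in>T. c v = 0" using iT[rule_format, of c] b0 unfolding b_def by simp
    ultimately show "c v = 0" using v by blast
  qed
qed

lemma dir41:
  fixes hb :: "'l::finite \<Rightarrow> 'g::euclidean_space" and \<rho> :: "'g \<Rightarrow> 'g \<Rightarrow> real"
  assumes w: "is_wedge2 \<rho>" and ind: "independent (range hb)" "inj hb"
    and lc: "lin_complement (hsub hb) M" and bs: "basis_of e m M"
    and eq: "\<forall>x y. \<rho> x y = (\<Sum>i\<in>UNIV. \<Sum>j\<in>UNIV. a i j * wedge2 (hb i) (hb j) x y)
                              + (\<Sum>i<m. \<Sum>j<m. c i j * wedge2 (e i) (e j) x y)"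
  shows "istar hb ` {\<xi>. sharp \<rho> \<xi> \<in> hsub hb} = UNIV"
proof (rule set_eqI, rule iffI)
  fix \<mu> :: "real^'l"
  have HM: "hsub hb \<inter> M = {0}" using lc by (simp add: lin_complement_def)
  have eind: "independent (e ` {..<m})" and espan: "span (e ` {..<m}) = M"
    using bs by (auto simp: basis_of_def)
  have ind2: "independent (range hb \<union> e ` {..<m})"
    by (rule indep_union[OF ind(1) eind]) (use HM espan in \<open>simp add: hsub_def\<close>)
  obtain \<xi> where \<xi>: "\<forall>v\<in>range hb \<union> e ` {..<m}. \<xi> \<bullet> v = (if v \<in> range hb then \<mu> $ inv hb v else 0)"
    using ext_dual[OF ind2, of "\<lambda>v. if v \<in> range hb then \<mu> $ inv hb v else 0"] by blast
  have xh: "\<xi> \<bullet> hb i = \<mu> $ i" for i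
  proof -
    have "hb i \<in> range hb \<union> e ` {..<m}" by simp
    then have "\<xi> \<bullet> hb i = (if hb i \<in> range hb then \<mu> $ inv hb (hb i) else 0)" using \<xi> by blast
    then show ?thesis using ind(2) by simp
  qed
  have xe: "\<xi> \<bullet> e k = 0" if "k < m" for k
  proof -
    have "e k \<notin> range hb"
    proof
      assume "e k \<in> range hb"
      then obtain i where i: "e k = hb i" by blast
      have "e k \<in> span (e ` {..<m})" using that by (simp add: span_base)
      then have "e k \<in> M" using espan by simp
      moreover have "e k \<in> hsub hb" using i hb_in[of hb i] by simp
      ultimately have "e k \<in> hsub hb \<inter> M" by simp
      then have "hb i = 0" using i HM by simp
      then have "0 \<in> range hb" by (metis rangeI)
      then show False using ind(1) dependent_zero by blast
    qed
    have "e k \<in> range hb \<union> e ` {..<m}" using that by simp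
    then have "\<xi> \<bullet> e k = (if e k \<in> range hb then \<mu> $ inv hb (e k) else 0)" using \<xi> by blast
    then show ?thesis using \<open>e k \<notin> range hb\<close> by simp
  qed
  define v where "v = (\<Sum>i\<in>UNIV. \<Sum>j\<in>UNIV. a i j *\<^sub>R ((\<mu> $ i) *\<^sub>R hb j - (\<mu> $ j) *\<^sub>R hb i))"
  have "\<rho> \<xi> y = y \<bullet> v" for y
  proof -
    have c0: "(\<Sum>i<m. \<Sum>j<m. c i j * wedge2 (e i) (e j) \<xi> y) = 0"
      by (intro sum.neutral ballI) (simp add: wedge2_def xe)
    have "y \<bullet> v = (\<Sum>i\<in>UNIV. \<Sum>j\<in>UNIV. a i j * wedge2 (hb i) (hb j) \<xi> y)"
      unfolding v_def inner_sum_right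
      by (intro sum.cong refl) (simp add: wedge2_def xh inner_diff_right)
    then show ?thesis using eq[rule_format, of \<xi> y] c0 by simp
  qed
  then have "sharp \<rho> \<xi> = v" by (rule sharp_eq[OF w])
  moreover have "v \<in> hsub hb" unfolding v_def hsub_def
    by (intro span_sum span_scale span_diff span_base) auto
  moreover have "istar hb \<xi> = \<mu>" by (simp add: vec_eq_iff istar_inner xh)
  ultimately have "\<xi> \<in> {\<xi>. sharp \<rho> \<xi> \<in> hsub hb}" "istar hb \<xi> = \<mu>" by simp_all
  then show "\<mu> \<in> istar hb ` {\<xi>. sharp \<rho> \<xi> \<in> hsub hb}" by (metis image_eqI)
qed simp

lemma span_image_sum:
  fixes f :: "nat \<Rightarrow> 'g::euclidean_space"
  assumes "x \<in> span {f k | k. k < m}"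
  shows "\<exists>\<gamma>. x = (\<Sum>k<m. \<gamma> k *\<^sub>R f k)"
proof -
  have "subspace {x. \<exists>\<gamma>. x = (\<Sum>k<m. \<gamma> k *\<^sub>R f k)}"
    unfolding subspace_def
  proof (intro conjI ballI allI; clarsimp)
    show "\<exists>\<gamma>. (\<Sum>k<m. \<gamma> k *\<^sub>R f k) = 0" by (rule exI[of _ "\<lambda>_. 0"]) simp
  next
    fix \<gamma>1 \<gamma>2
    show "\<exists>\<gamma>. (\<Sum>k<m. \<gamma>1 k *\<^sub>R f k) + (\<Sum>k<m. \<gamma>2 k *\<^sub>R f k) = (\<Sum>k<m. \<gamma> k *\<^sub>R f k)"
      by (rule exI[of _ "\<lambda>k. \<gamma>1 k + \<gamma>2 k"]) (simp add: scaleR_add_left sum.distrib)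
  next
    fix c :: real and \<gamma>
    show "\<exists>\<gamma>'. c *\<^sub>R (\<Sum>k<m. \<gamma> k *\<^sub>R f k) = (\<Sum>k<m. \<gamma>' k *\<^sub>R f k)"
      by (rule exI[of _ "\<lambda>k. c * \<gamma> k"]) (simp add: scaleR_sum_right)
  qed
  moreover have "\<exists>\<gamma>. f j = (\<Sum>k<m. \<gamma> k *\<^sub>R f k)" if "j < m" for j
    by (rule exI[of _ "\<lambda>k. if k = j then 1 else 0"]) (use that in \<open>simp add: if_distrib[of "\<lambda>c. c *\<^sub>R f _"] cong: if_cong\<close>)
  ultimately show ?thesis
    using span_induct[OF assms, of "\<lambda>x. \<exists>\<gamma>. x = (\<Sum>k<m. \<gamma> k *\<^sub>R f k)"] by blast
qed

lemma dir13:
  fixes hb :: "'l::finite \<Rightarrow> 'g::euclidean_space" and \<rho> :: "'g \<Rightarrow> 'g \<Rightarrow> real"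
    and a :: "'l \<Rightarrow> 'l \<Rightarrow> real" and b :: "'l \<Rightarrow> nat \<Rightarrow> real" and c :: "nat \<Rightarrow> nat \<Rightarrow> real"
  assumes w: "is_wedge2 \<rho>" and c1: "istar hb ` {\<xi>. sharp \<rho> \<xi> \<in> hsub hb} = UNIV"
    and lc: "lin_complement (hsub hb) M" and bs: "basis_of e m M"
    and cas: "\<forall>i<m. \<forall>j<m. c i j = - c j i"
    and eq: "\<forall>x y. \<rho> x y = (\<Sum>i\<in>UNIV. \<Sum>j\<in>UNIV. a i j * wedge2 (hb i) (hb j) x y)
                                 + (\<Sum>i\<in>UNIV. \<Sum>j<m. b i j * wedge2 (hb i) (e j) x y)
                                 + (\<Sum>i<m. \<Sum>j<m. c i j * wedge2 (e i) (e j) x y)"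
  shows "(\<Sum>j<m. b i j *\<^sub>R e j) \<in> span {(\<Sum>j<m. c k j *\<^sub>R e j) | k. k < m}"
proof -
  obtain \<xi> where \<xi>: "istar hb \<xi> = axis i 1" "sharp \<rho> \<xi> \<in> hsub hb"
    using c1 by (metis (no_types, lifting) UNIV_I imageE mem_Collect_eq)
  have xh: "\<xi> \<bullet> hb i' = (if i = i' then 1 else 0)" for i'
    by (rule dual_of_axes1[OF \<xi>(1)])
  have HM: "hsub hb \<inter> M = {0}" using lc by (simp add: lin_complement_def)
  have espan: "span (e ` {..<m}) = M" using bs by (auto simp: basis_of_def)
  define \<beta> where "\<beta> k = \<xi> \<bullet> e k" for k
  define H1 where "H1 = (\<Sum>i'\<in>UNIV. \<Sum>j\<in>UNIV. a i' j *\<^sub>R ((\<xi> \<bullet> hb i') *\<^sub>R hb j - (\<xi> \<bullet> hb j) *\<^sub>R hb i'))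
       - (\<Sum>i'\<in>UNIV. \<Sum>j<m. (b i' j * \<beta> j) *\<^sub>R hb i')"
  define Mv where "Mv = (\<Sum>i'\<in>UNIV. \<Sum>j<m. (b i' j * (\<xi> \<bullet> hb i')) *\<^sub>R e j)
       + (\<Sum>k<m. \<Sum>j<m. (c k j * \<beta> k) *\<^sub>R e j) - (\<Sum>k<m. \<Sum>j<m. (c k j * \<beta> j) *\<^sub>R e k)"
  define VA where "VA = (\<Sum>i'\<in>UNIV. \<Sum>j\<in>UNIV. a i' j *\<^sub>R ((\<xi> \<bullet> hb i') *\<^sub>R hb j - (\<xi> \<bullet> hb j) *\<^sub>R hb i'))"
  define VB where "VB = (\<Sum>i'\<in>UNIV. \<Sum>j<m. b i' j *\<^sub>R ((\<xi> \<bullet> hb i') *\<^sub>R e j - \<beta> j *\<^sub>R hb i'))"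
  define VC where "VC = (\<Sum>k<m. \<Sum>j<m. c k j *\<^sub>R (\<beta> k *\<^sub>R e j - \<beta> j *\<^sub>R e k))"
  have "\<rho> \<xi> y = y \<bullet> (VA + VB + VC)" for y
  proof -
    have A: "y \<bullet> VA = (\<Sum>i\<in>UNIV. \<Sum>j\<in>UNIV. a i j * wedge2 (hb i) (hb j) \<xi> y)"
      unfolding VA_def inner_sum_right
      by (intro sum.cong refl) (simp add: wedge2_def inner_diff_right)
    have B: "y \<bullet> VB = (\<Sum>i\<in>UNIV. \<Sum>j<m. b i j * wedge2 (hb i) (e j) \<xi> y)"
      unfolding VB_def inner_sum_right
      by (intro sum.cong refl) (simp add: wedge2_def inner_diff_right \<beta>_def)
    have C: "y \<bullet> VC = (\<Sum>i<m. \<Sum>j<m. c i j * wedge2 (e i) (e j) \<xi> y)"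
      unfolding VC_def inner_sum_right
      by (intro sum.cong refl) (simp add: wedge2_def inner_diff_right \<beta>_def)
    show ?thesis using eq[rule_format, of \<xi> y] A B C by (simp add: inner_add_right)
  qed
  then have sv0: "sharp \<rho> \<xi> = VA + VB + VC" by (rule sharp_eq[OF w])
  have VB: "VB = (\<Sum>i'\<in>UNIV. \<Sum>j<m. (b i' j * (\<xi> \<bullet> hb i')) *\<^sub>R e j) - (\<Sum>i'\<in>UNIV. \<Sum>j<m. (b i' j * \<beta> j) *\<^sub>R hb i')"
    unfolding VB_def by (simp add: scaleR_diff_right sum_subtractf)
  have VC: "VC = (\<Sum>k<m. \<Sum>j<m. (c k j * \<beta> k) *\<^sub>R e j) - (\<Sum>k<m. \<Sum>j<m. (c k j * \<beta> j) *\<^sub>R e k)"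
    unfolding VC_def by (simp add: scaleR_diff_right sum_subtractf)
  have "sharp \<rho> \<xi> = H1 + Mv" unfolding sv0 VB VC H1_def Mv_def VA_def by simp
  then have sv: "sharp \<rho> \<xi> = H1 + Mv" .
  have H1h: "H1 \<in> hsub hb" unfolding H1_def hsub_def
    by (intro span_sum span_scale span_diff span_base) auto
  have "Mv = sharp \<rho> \<xi> - H1" using sv by simp
  then have Mvh: "Mv \<in> hsub hb" using \<xi>(2) H1h hsub_diff[of "sharp \<rho> \<xi>" hb H1] by simp
  have "Mv \<in> span (e ` {..<m})" unfolding Mv_def
    by (intro span_sum span_scale span_diff span_add span_base) auto
  then have "Mv \<in> hsub hb \<inter> M" using Mvh espan by simp
  then have Mv0: "Mv = 0" using HM by simp
  have P1: "(\<Sum>i'\<in>UNIV. \<Sum>j<m. (b i' j * (\<xi> \<bullet> hb i')) *\<^sub>R e j) = (\<Sum>j<m. b i j *\<^sub>R e j)"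
  proof -
    have "(\<Sum>i'\<in>UNIV. \<Sum>j<m. (b i' j * (\<xi> \<bullet> hb i')) *\<^sub>R e j)
        = (\<Sum>i'\<in>UNIV. if i = i' then (\<Sum>j<m. b i' j *\<^sub>R e j) else 0)"
      by (intro sum.cong refl) (simp add: xh)
    then show ?thesis by simp
  qed
  have P3: "(\<Sum>k<m. \<Sum>j<m. (c k j * \<beta> j) *\<^sub>R e k) = - (\<Sum>k<m. \<Sum>j<m. (c k j * \<beta> k) *\<^sub>R e j)"
  proof -
    have "(\<Sum>k<m. \<Sum>j<m. (c k j * \<beta> j) *\<^sub>R e k) = (\<Sum>j<m. \<Sum>k<m. (c k j * \<beta> j) *\<^sub>R e k)"
      by (rule sum.swap)
    also have "\<dots> = (\<Sum>j<m. \<Sum>k<m. - ((c j k * \<beta> j) *\<^sub>R e k))"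
    proof (intro sum.cong refl)
      fix j k assume jk: "j \<in> {..<m}" "k \<in> {..<m}"
      have "c k j = - c j k" by (rule cas[rule_format]) (use jk in auto)
      then show "(c k j * \<beta> j) *\<^sub>R e k = - ((c j k * \<beta> j) *\<^sub>R e k)" by simp
    qed
    also have "\<dots> = - (\<Sum>k<m. \<Sum>j<m. (c k j * \<beta> k) *\<^sub>R e j)" by (simp add: sum_negf)
    finally show ?thesis .
  qed
  define X where "X = (\<Sum>k<m. \<beta> k *\<^sub>R (\<Sum>j<m. c k j *\<^sub>R e j))"
  have XX: "(\<Sum>k<m. \<Sum>j<m. (c k j * \<beta> k) *\<^sub>R e j) = X"
    unfolding X_def by (simp add: scaleR_sum_right mult.commute)
  have h: "(\<Sum>j<m. b i j *\<^sub>R e j) + X + X = 0"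
    using Mv0 unfolding Mv_def P1 P3 XX by simp
  have "(\<Sum>j<m. b i j *\<^sub>R e j) = - (X + X)"
    using h by (simp only: add.assoc eq_neg_iff_add_eq_0)
  then have Seq: "(\<Sum>j<m. b i j *\<^sub>R e j) = - (2 *\<^sub>R X)" by (simp only: scaleR_2)
  have mem: "\<And>k. k < m \<Longrightarrow> (\<Sum>j<m. c k j *\<^sub>R e j) \<in> {(\<Sum>j<m. c k j *\<^sub>R e j) | k. k < m}"
    by blast
  have Xs: "X \<in> span {(\<Sum>j<m. c k j *\<^sub>R e j) | k. k < m}"
    unfolding X_def by (intro span_sum span_scale span_base mem) simp
  show ?thesis unfolding Seq by (intro span_neg span_scale Xs)
qed

lemma dir31:
  fixes hb :: "'l::finite \<Rightarrow> 'g::euclidean_space" and r :: "real^'l \<Rightarrow> 'g \<Rightarrow> 'g \<Rightarrow> real"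
  assumes w: "is_wedge2 (r la)" and ind: "independent (range hb)" "inj hb"
    and c3: "\<forall>M e m. lin_complement (hsub hb) M \<and> basis_of e m M \<longrightarrow>
               (\<forall>la (a::'l \<Rightarrow> 'l \<Rightarrow> real) (b::'l \<Rightarrow> nat \<Rightarrow> real) (c::nat \<Rightarrow> nat \<Rightarrow> real).
                  (\<forall>i j. a i j = - a j i) \<and> (\<forall>i<m. \<forall>j<m. c i j = - c j i) \<and>
                  (\<forall>x y. r la x y = (\<Sum>i\<in>UNIV. \<Sum>j\<in>UNIV. a i j * wedge2 (hb i) (hb j) x y)
                                 + (\<Sum>i\<in>UNIV. \<Sum>j<m. b i j * wedge2 (hb i) (e j) x y)
                                 + (\<Sum>i<m. \<Sum>j<m. c i j * wedge2 (e i) (e j) x y))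
                  \<longrightarrow> (\<forall>i. (\<Sum>j<m. b i j *\<^sub>R e j) \<in> span {(\<Sum>j<m. c k j *\<^sub>R e j) | k. k < m}))"
  shows "istar hb ` {\<xi>. sharp (r la) \<xi> \<in> hsub hb} = UNIV"
proof -
  define \<rho> where "\<rho> = r la"
  have w': "is_wedge2 \<rho>" using w by (simp add: \<rho>_def)
  have sk: "\<And>a b. \<rho> a b = - \<rho> b a" using w' unfolding is_wedge2_def by blast
  have bl: "bilinear \<rho>" using w' unfolding is_wedge2_def by blast
  have "\<forall>i. \<exists>\<xi>. istar hb \<xi> = axis i 1" using istar_surj[OF ind] by blast
  then obtain X where X: "\<forall>i. istar hb (X i) = axis i 1" by (rule choice[THEN exE]) blast
  have dual: "X i \<bullet> hb j = (if i = j then 1 else 0)" for i j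
    by (rule dual_of_axes1) (use X in blast)
  obtain M e m where fr0: "lin_complement (hsub hb) M" "basis_of e m M"
    "\<And>j k. j < m \<Longrightarrow> k < m \<Longrightarrow> e j \<bullet> e k = (if j = k then 1 else 0)"
    "\<And>i k. k < m \<Longrightarrow> X i \<bullet> e k = 0"
    "\<And>v. v = (\<Sum>i\<in>UNIV. (X i \<bullet> v) *\<^sub>R hb i) + (\<Sum>k<m. (etaf hb X (e k) \<bullet> v) *\<^sub>R e k)"
    "\<And>x. x = (\<Sum>i\<in>UNIV. (x \<bullet> hb i) *\<^sub>R X i) + (\<Sum>k<m. (x \<bullet> e k) *\<^sub>R etaf hb X (e k))"
    by (rule frame[of X hb, OF dual]) blast
  define \<eta> where "\<eta> k = etaf hb X (e k)" for k
  define a where "a i j = \<rho> (X i) (X j) / 2" for i j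
  define b where "b i k = \<rho> (X i) (\<eta> k)" for i k
  define c where "c k j = \<rho> (\<eta> k) (\<eta> j) / 2" for k j
  have eq: "\<forall>x y. r la x y = (\<Sum>i\<in>UNIV. \<Sum>j\<in>UNIV. a i j * wedge2 (hb i) (hb j) x y)
                                 + (\<Sum>i\<in>UNIV. \<Sum>j<m. b i j * wedge2 (hb i) (e j) x y)
                                 + (\<Sum>i<m. \<Sum>j<m. c i j * wedge2 (e i) (e j) x y)"
    unfolding a_def b_def c_def \<eta>_def \<rho>_def[symmetric]
    using expand[OF w' fr0(6)] by blast
  have aas: "\<forall>i j. a i j = - a j i" unfolding a_def by (intro allI) (subst sk, simp)
  have cas: "\<forall>i<m. \<forall>j<m. c i j = - c j i" unfolding c_def by (intro allI impI) (subst sk, simp)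
  have spanb: "\<forall>i. (\<Sum>j<m. b i j *\<^sub>R e j) \<in> span {(\<Sum>j<m. c k j *\<^sub>R e j) | k. k < m}"
    using c3 fr0(1,2) aas cas eq by blast
  have coord: "(\<Sum>j'<m. d j' *\<^sub>R e j') \<bullet> e j = d j" if "j < m" for d j
  proof -
    have "(\<Sum>j'<m. d j' *\<^sub>R e j') \<bullet> e j = (\<Sum>j'<m. if j' = j then d j' else 0)"
      unfolding inner_sum_left by (intro sum.cong refl) (simp add: fr0(3) that)
    then show ?thesis using that by simp
  qed
  have eta_h: "\<eta> k \<bullet> hb i' = 0" for k i' unfolding \<eta>_def by (rule eta_perp[OF dual])
  have ax: "\<exists>\<xi>. istar hb \<xi> = axis i 1 \<and> sharp \<rho> \<xi> \<in> hsub hb" for i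
  proof -
    obtain \<gamma> where \<gamma>: "(\<Sum>j<m. b i j *\<^sub>R e j) = (\<Sum>k<m. \<gamma> k *\<^sub>R (\<Sum>j<m. c k j *\<^sub>R e j))"
      using span_image_sum[of "(\<Sum>j<m. b i j *\<^sub>R e j)" "\<lambda>k. \<Sum>j<m. c k j *\<^sub>R e j" m] spanb by blast
    have "(\<Sum>k<m. \<gamma> k *\<^sub>R (\<Sum>j<m. c k j *\<^sub>R e j)) = (\<Sum>k<m. \<Sum>j<m. (\<gamma> k * c k j) *\<^sub>R e j)"
      by (simp add: scaleR_sum_right)
    also have "\<dots> = (\<Sum>j<m. \<Sum>k<m. (\<gamma> k * c k j) *\<^sub>R e j)" by (rule sum.swap)
    also have "\<dots> = (\<Sum>j<m. (\<Sum>k<m. \<gamma> k * c k j) *\<^sub>R e j)" by (simp add: scaleR_sum_left)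
    finally have \<gamma>2: "(\<Sum>j<m. b i j *\<^sub>R e j) = (\<Sum>j<m. (\<Sum>k<m. \<gamma> k * c k j) *\<^sub>R e j)" using \<gamma> by simp
    have bc: "b i j = (\<Sum>k<m. \<gamma> k * c k j)" if "j < m" for j
      using arg_cong[OF \<gamma>2, of "\<lambda>v. v \<bullet> e j"] coord[OF that] by simp
    define \<xi> where "\<xi> = X i - (\<Sum>k<m. (\<gamma> k / 2) *\<^sub>R \<eta> k)"
    have "istar hb \<xi> = axis i 1"
      by (simp add: vec_eq_iff istar_inner \<xi>_def inner_diff_left inner_sum_left eta_h dual axis_def)
    moreover have z: "\<rho> \<xi> (\<eta> j) = 0" if "j < m" for j
    proof -
      have l: "linear (\<lambda>x. \<rho> x (\<eta> j))" by (rule bil_l[OF bl])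
      have "\<rho> \<xi> (\<eta> j) = \<rho> (X i) (\<eta> j) - (\<Sum>k<m. (\<gamma> k / 2) * \<rho> (\<eta> k) (\<eta> j))"
        unfolding \<xi>_def by (simp add: linear_diff[OF l] linear_sum[OF l] linear_scale[OF l] o_def)
      also have "\<dots> = b i j - (\<Sum>k<m. \<gamma> k * c k j)"
        unfolding b_def c_def by simp
      also have "\<dots> = 0" using bc[OF that] by simp
      finally show ?thesis .
    qed
    moreover have "sharp \<rho> \<xi> \<in> hsub hb"
    proof -
      define v where "v = sharp \<rho> \<xi>"
      have "(\<Sum>k<m. (etaf hb X (e k) \<bullet> v) *\<^sub>R e k) = 0"
      proof (intro sum.neutral ballI)
        fix k assume "k \<in> {..<m}"
        then have "etaf hb X (e k) \<bullet> v = 0"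
          using z[of k] unfolding v_def \<eta>_def by (simp add: sharp_inner[OF w'])
        then show "(etaf hb X (e k) \<bullet> v) *\<^sub>R e k = 0" by simp
      qed
      then have "v = (\<Sum>i\<in>UNIV. (X i \<bullet> v) *\<^sub>R hb i)" using fr0(5)[of v] by simp
      then show ?thesis unfolding v_def using hsum_in by metis
    qed
    ultimately show ?thesis by blast
  qed
  show ?thesis using axes[OF w' ax] unfolding \<rho>_def .
qed

theorem proposition2p7:
  fixes br :: "'g::euclidean_space \<Rightarrow> 'g \<Rightarrow> 'g"
    and hb :: "'l::finite \<Rightarrow> 'g"
    and r :: "real^'l \<Rightarrow> 'g \<Rightarrow> 'g \<Rightarrow> real"
  assumes "lie_algebra br"
    and "abelian_subalgebra_basis br hb"
    and "triangular_dynamical_r_matrix br hb r"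
  defines "C1 \<equiv> (\<forall>la. istar hb ` {\<xi>. sharp (r la) \<xi> \<in> hsub hb} = UNIV)"
    and "C2 \<equiv> (\<forall>la. range (sharp (r la)) \<subseteq> g_lambda hb (r la))"
    and "C3 \<equiv> (\<forall>M e m. lin_complement (hsub hb) M \<and> basis_of e m M \<longrightarrow>
               (\<forall>la (a::'l \<Rightarrow> 'l \<Rightarrow> real) (b::'l \<Rightarrow> nat \<Rightarrow> real) (c::nat \<Rightarrow> nat \<Rightarrow> real).
                  (\<forall>i j. a i j = - a j i) \<and> (\<forall>i<m. \<forall>j<m. c i j = - c j i) \<and>
                  (\<forall>x y. r la x y = (\<Sum>i\<in>UNIV. \<Sum>j\<in>UNIV. a i j * wedge2 (hb i) (hb j) x y)
                                 + (\<Sum>i\<in>UNIV. \<Sum>j<m. b i j * wedge2 (hb i) (e j) x y)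
                                 + (\<Sum>i<m. \<Sum>j<m. c i j * wedge2 (e i) (e j) x y))
                  \<longrightarrow> (\<forall>i. (\<Sum>j<m. b i j *\<^sub>R e j) \<in> span {(\<Sum>j<m. c k j *\<^sub>R e j) | k. k < m})))"
    and "C4 \<equiv> (\<forall>la. \<exists>M e m (a::'l \<Rightarrow> 'l \<Rightarrow> real) (c::nat \<Rightarrow> nat \<Rightarrow> real).
               lin_complement (hsub hb) M \<and> basis_of e m M \<and>
               (\<forall>i j. a i j = - a j i) \<and> (\<forall>i<m. \<forall>j<m. c i j = - c j i) \<and>
               (\<forall>x y. r la x y = (\<Sum>i\<in>UNIV. \<Sum>j\<in>UNIV. a i j * wedge2 (hb i) (hb j) x y)
                              + (\<Sum>i<m. \<Sum>j<m. c i j * wedge2 (e i) (e j) x y)))"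
    and "C5 \<equiv> ({(la, (\<mu>, 0)) | la \<mu>. True} \<subseteq> Bset hb r)"
  shows "(C1 \<longleftrightarrow> C2) \<and> (C2 \<longleftrightarrow> C3) \<and> (C3 \<longleftrightarrow> C4) \<and> (C4 \<longleftrightarrow> C5)"
proof -
  have w: "is_wedge2 (r la)" for la :: "real^'l"
    using assms(3) unfolding triangular_dynamical_r_matrix_def by blast
  have ind: "independent (range hb)" "inj hb"
    using assms(2) unfolding abelian_subalgebra_basis_def by blast+
  have e12: "C1 \<longleftrightarrow> C2"
    unfolding C1_def C2_def using dir12[OF w] dir21[OF w ind] by blast
  have e13: "C1 \<longleftrightarrow> C3"
  proof
    assume c1: C1
    show C3 unfolding C3_def
    proof (intro allI impI)
      fix M e m la and a :: "'l \<Rightarrow> 'l \<Rightarrow> real" and b :: "'l \<Rightarrow> nat \<Rightarrow> real" and c :: "nat \<Rightarrow> nat \<Rightarrow> real" and i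
      assume h1: "lin_complement (hsub hb) M \<and> basis_of e m M"
      assume h2: "(\<forall>i j. a i j = - a j i) \<and> (\<forall>i<m. \<forall>j<m. c i j = - c j i) \<and>
                  (\<forall>x y. r la x y = (\<Sum>i\<in>UNIV. \<Sum>j\<in>UNIV. a i j * wedge2 (hb i) (hb j) x y)
                                 + (\<Sum>i\<in>UNIV. \<Sum>j<m. b i j * wedge2 (hb i) (e j) x y)
                                 + (\<Sum>i<m. \<Sum>j<m. c i j * wedge2 (e i) (e j) x y))"
      show "(\<Sum>j<m. b i j *\<^sub>R e j) \<in> span {(\<Sum>j<m. c k j *\<^sub>R e j) | k. k < m}"
        using dir13[OF w c1[unfolded C1_def, THEN spec] conjunct1[OF h1] conjunct2[OF h1]
            conjunct1[OF conjunct2[OF h2]] conjunct2[OF conjunct2[OF h2]]] .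
    qed
  next
    assume c3: C3
    show C1 unfolding C1_def
    proof
      fix la
      show "istar hb ` {\<xi>. sharp (r la) \<xi> \<in> hsub hb} = UNIV"
        by (rule dir31[OF w ind c3[unfolded C3_def]])
    qed
  qed
  have e14: "C1 \<longleftrightarrow> C4"
  proof
    assume c1: C1
    show C4 unfolding C4_def
    proof
      fix la
      show "\<exists>M e m (a::'l \<Rightarrow> 'l \<Rightarrow> real) (c::nat \<Rightarrow> nat \<Rightarrow> real).
               lin_complement (hsub hb) M \<and> basis_of e m M \<and>
               (\<forall>i j. a i j = - a j i) \<and> (\<forall>i<m. \<forall>j<m. c i j = - c j i) \<and>
               (\<forall>x y. r la x y = (\<Sum>i\<in>UNIV. \<Sum>j\<in>UNIV. a i j * wedge2 (hb i) (hb j) x y)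
                              + (\<Sum>i<m. \<Sum>j<m. c i j * wedge2 (e i) (e j) x y))"
        by (rule dir14[OF w c1[unfolded C1_def, THEN spec]])
    qed
  next
    assume c4: C4
    show C1 unfolding C1_def
    proof
      fix la
      obtain M e m and a :: "'l \<Rightarrow> 'l \<Rightarrow> real" and c :: "nat \<Rightarrow> nat \<Rightarrow> real" where
        h: "lin_complement (hsub hb) M" "basis_of e m M"
        "\<forall>x y. r la x y = (\<Sum>i\<in>UNIV. \<Sum>j\<in>UNIV. a i j * wedge2 (hb i) (hb j) x y)
                              + (\<Sum>i<m. \<Sum>j<m. c i j * wedge2 (e i) (e j) x y)"
        using c4 unfolding C4_def by blast
      show "istar hb ` {\<xi>. sharp (r la) \<xi> \<in> hsub hb} = UNIV"
        by (rule dir41[OF w ind h])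
    qed
  qed
  have e15: "C1 \<longleftrightarrow> C5"
  proof
    assume c1: C1
    show C5 unfolding C5_def
    proof
      fix p :: "(real^'l) \<times> (real^'l) \<times> 'g" assume "p \<in> {(la, (\<mu>, 0)) | la \<mu>. True}"
      then obtain la \<mu> :: "real^'l" where p: "p = (la, (\<mu>, 0))" by blast
      have "\<mu> \<in> istar hb ` {\<xi>. sharp (r la) \<xi> \<in> hsub hb}" using c1 unfolding C1_def by simp
      then obtain \<xi> where \<xi>: "istar hb \<xi> = \<mu>" "sharp (r la) \<xi> \<in> hsub hb" by blast
      have L: "Lambda_sharp hb r la (sharp (r la) \<xi>, \<xi>) = (\<mu>, 0)"
        by (simp add: Lambda_sharp_def \<xi>(1))
      show "p \<in> Bset hb r" unfolding Bset_def p
        apply (rule CollectI)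
        apply (rule exI[of _ la], rule exI[of _ "sharp (r la) \<xi>"], rule exI[of _ \<xi>])
        using L \<xi>(2) by simp
    qed
  next
    assume c5: C5
    show C1 unfolding C1_def
    proof (intro allI set_eqI iffI)
      fix la and \<mu> :: "real^'l"
      have "(la, (\<mu>, 0)) \<in> Bset hb r" using c5 unfolding C5_def by blast
      then obtain h \<xi> where h: "h \<in> hsub hb" "(\<mu>, 0) = Lambda_sharp hb r la (h, \<xi>)"
        unfolding Bset_def by blast
      then have "istar hb \<xi> = \<mu>" "sharp (r la) \<xi> = h" by (simp_all add: Lambda_sharp_def)
      then show "\<mu> \<in> istar hb ` {\<xi>. sharp (r la) \<xi> \<in> hsub hb}" using h(1) by blast
    qed simp
  qed
  show ?thesis using e12 e13 e14 e15 by blast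
qed

end
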